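(* Let $D$ be an infinite commutative unital integral domain. The $D$-module $D\langle X\rangle/I$ is spanned by the images of the monomials in $B$.
   Context: Let $Y=\{y_1,y_2,\dots\}$ and $Z=\{z_1,z_2,\dots\}$ be disjoint countable sets of variables, $X=Y\cup Z$, and $D\langle X\rangle$ the free unital associative $D$-algebra on $X$, $\mathbb{Z}_2$-graded with the $y_i$ even and the $z_i$ odd. Let $L\langle X\rangle$ be the Lie subalgebra of $D\langle X\rangle$ (bracket $[a,b]=ab-ba$) generated by $X$, with induced grading $L\langle X\rangle^{(0)}\oplus L\langle X\rangle^{(1)}$. An ideal of weak graded identities is a two-sided ideal $J$ of $D\langle X\rangle$ closed under every algebra endomorphism of $D\langle X\rangle$ mapping each $y_i$ into $L\langle X\rangle^{(0)}$ and each $z_i$ into $L\langle X\rangle^{(1)}$; the ideal of weak graded identities generated by a set of polynomials is the smallest such ideal containing it. Let $I$ be the ideal of weak graded identities generated by $y_1y_2-y_2y_1$, $z_1z_2z_3-z_3z_2z_1$ and $y_1z_1+z_1y_1$. Let $B$ be the set of monomials of the forms $y_{a_1}\cdots y_{a_k}$ ($k\ge0$, $a_1\le\dots\le a_k$; $k=0$ gives $1$) and $y_{a_1}\cdots y_{a_k}z_{c_1}z_{d_1}z_{c_2}z_{d_2}\cdots z_{c_m}z_{d_m}$ or $y_{a_1}\cdots y_{a_k}z_{c_1}z_{d_1}\cdots z_{d_{m-1}}z_{c_m}$ (the last odd variable $z_{d_m}$ may be omitted), where $k\ge0$, $m\ge1$, $a_1\le\dots\le a_k$, $c_1\le\dots\le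 c_m$, and the $d_j$ present are nondecreasing. *)

theory Defs
  imports Main
begin

text \<open>Variables: Y i (even) and Z i (odd), i :: nat.\<close>
datatype var = Y nat | Z nat

text \<open>Elements of the free algebra D<X>: functions from words (monomials) to
coefficients with finite support (carrier ncP).\<close>
type_synonym 'a ncpoly = "var list \<Rightarrow> 'a"

definition ncP :: "'a::zero ncpoly set" where
  "ncP = {f. finite {w. f w \<noteq> 0}}"

definition mon :: "var list \<Rightarrow> 'a::{zero,one} ncpoly" where
  "mon u = (\<lambda>w. if w = u then 1 else 0)"

definition padd :: "'a::plus ncpoly \<Rightarrow> 'a ncpoly \<Rightarrow> 'a ncpoly" where
  "padd f g = (\<lambda>w. f w + g w)"

definition psub :: "'a::minus ncpoly \<Rightarrow> 'a ncpoly \<Rightarrow> 'a ncpoly" where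
  "psub f g = (\<lambda>w. f w - g w)"

definition psmult :: "'a::times \<Rightarrow> 'a ncpoly \<Rightarrow> 'a ncpoly" where
  "psmult c f = (\<lambda>w. c * f w)"

definition pmul :: "'a::comm_ring_1 ncpoly \<Rightarrow> 'a ncpoly \<Rightarrow> 'a ncpoly" where
  "pmul f g = (\<lambda>w. \<Sum>i\<le>length w. f (take i w) * g (drop i w))"

definition pbr :: "'a::comm_ring_1 ncpoly \<Rightarrow> 'a ncpoly \<Rightarrow> 'a ncpoly" where
  "pbr a b = psub (pmul a b) (pmul b a)"

definition eval_word :: "(var \<Rightarrow> 'a::comm_ring_1 ncpoly) \<Rightarrow> var list \<Rightarrow> 'a ncpoly" where
  "eval_word s u = foldr (\<lambda>x acc. pmul (s x) acc) u (mon [])"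

definition subst :: "(var \<Rightarrow> 'a::comm_ring_1 ncpoly) \<Rightarrow> 'a ncpoly \<Rightarrow> 'a ncpoly" where
  "subst s f = (\<lambda>w. \<Sum>u\<in>{u. f u \<noteq> 0}. f u * eval_word s u w)"

inductive_set LieX :: "'a::comm_ring_1 ncpoly set" where
  gen: "mon [x] \<in> LieX"
| zero: "(\<lambda>_. 0) \<in> LieX"
| add: "a \<in> LieX \<Longrightarrow> b \<in> LieX \<Longrightarrow> padd a b \<in> LieX"
| smult: "a \<in> LieX \<Longrightarrow> psmult c a \<in> LieX"
| br: "a \<in> LieX \<Longrightarrow> b \<in> LieX \<Longrightarrow> pbr a b \<in> LieX"

definition is_Z :: "var \<Rightarrow> bool" where
  "is_Z x = (case x of Z _ \<Rightarrow> True | Y _ \<Rightarrow> False)"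

definition zdeg :: "var list \<Rightarrow> nat" where
  "zdeg w = length (filter is_Z w)"

text \<open>Homogeneous component of Z2-degree p (False = even, True = odd).\<close>
definition homog :: "bool \<Rightarrow> 'a::zero ncpoly \<Rightarrow> bool" where
  "homog p f = (\<forall>w. f w \<noteq> 0 \<longrightarrow> odd (zdeg w) = p)"

definition L0 :: "'a::comm_ring_1 ncpoly set" where
  "L0 = {f \<in> LieX. homog False f}"

definition L1 :: "'a::comm_ring_1 ncpoly set" where
  "L1 = {f \<in> LieX. homog True f}"

definition is_ideal :: "'a::comm_ring_1 ncpoly set \<Rightarrow> bool" where
  "is_ideal J = (J \<subseteq> ncP \<and> (\<lambda>_. 0) \<in> J
     \<and> (\<forall>a\<in>J. \<forall>b\<in>J. padd a b \<in> J)
     \<and> (\<forall>a\<in>J. \<forall>p\<in>ncP. pmul p a \<in> J \<and> pmul a p \<in> J))"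

definition weak_subst :: "(var \<Rightarrow> 'a::comm_ring_1 ncpoly) \<Rightarrow> bool" where
  "weak_subst s = ((\<forall>i. s (Y i) \<in> L0) \<and> (\<forall>i. s (Z i) \<in> L1))"

definition weak_ideal :: "'a::comm_ring_1 ncpoly set \<Rightarrow> bool" where
  "weak_ideal J = (is_ideal J \<and> (\<forall>s. weak_subst s \<longrightarrow> (\<forall>f\<in>J. subst s f \<in> J)))"

definition weak_ideal_gen :: "'a::comm_ring_1 ncpoly set \<Rightarrow> 'a ncpoly set" where
  "weak_ideal_gen S = \<Inter> {J. weak_ideal J \<and> S \<subseteq> J}"

definition gens :: "'a::comm_ring_1 ncpoly set" where
  "gens = {psub (mon [Y 1, Y 2]) (mon [Y 2, Y 1]),
           psub (mon [Z 1, Z 2, Z 3]) (mon [Z 3, Z 2, Z 1]),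
           padd (mon [Y 1, Z 1]) (mon [Z 1, Y 1])}"

definition Iw :: "'a::comm_ring_1 ncpoly set" where
  "Iw = weak_ideal_gen gens"

text \<open>The monomial set B: y_{a1}..y_{ak} z_{c1} z_{d1} ... with a, c, d nondecreasing;
 c is the subsequence of even positions of the z-index list, d the odd positions.\<close>
definition Bmon :: "var list set" where
  "Bmon = {map Y a @ map Z c | a c. sorted a \<and>
      (\<forall>i j. i < j \<and> j < length c \<and> even i = even j \<longrightarrow> c ! i \<le> c ! j)}"

end

theory Submission
  imports Defs
begin

lemma mon_apply: "mon u w = (if w = u then 1 else 0)" by (simp add: mon_def)

lemma mon_ncP: "(mon u :: 'a::{zero,one} ncpoly) \<in> ncP"
proof -
  have "{w. mon u w \<noteq> (0::'a)} \<subseteq> {u}" by (auto simp: mon_apply)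
  then show ?thesis unfolding ncP_def using finite_subset by blast
qed

lemma psmult_ncP: "(f :: 'a::{mult_zero} ncpoly) \<in> ncP \<Longrightarrow> psmult c f \<in> ncP"
proof -
  assume f: "f \<in> ncP"
  have "{w. psmult c f w \<noteq> 0} \<subseteq> {w. f w \<noteq> 0}" by (auto simp: psmult_def)
  then show ?thesis using f unfolding ncP_def using finite_subset by blast
qed

lemma padd_ncP: "(f :: 'a::{monoid_add} ncpoly) \<in> ncP \<Longrightarrow> g \<in> ncP \<Longrightarrow> padd f g \<in> ncP"
proof -
  assume f: "f \<in> ncP" and g: "g \<in> ncP"
  have "{w. padd f g w \<noteq> 0} \<subseteq> {w. f w \<noteq> 0} \<union> {w. g w \<noteq> 0}" by (auto simp: padd_def)
  then show ?thesis using f g unfolding ncP_def using finite_subset by blast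
qed

lemma pmul_mon_mon: "pmul (mon u) (mon v) = (mon (u @ v) :: 'a::comm_ring_1 ncpoly)"
proof
  fix w :: "var list"
  have "pmul (mon u) (mon v) w =
     (\<Sum>i\<le>length w. if i = length u then (if w = u @ v then 1 else 0) else (0::'a))"
    unfolding pmul_def
  proof (rule sum.cong[OF refl])
    fix i assume "i \<in> {..length w}"
    then have i: "i \<le> length w" by simp
    show "mon u (take i w) * mon v (drop i w) = (if i = length u then (if w = u @ v then 1 else 0) else (0::'a))"
    proof (cases "take i w = u \<and> drop i w = v")
      case True
      have "w = take i w @ drop i w" by (rule append_take_drop_id[symmetric])
      then have "w = u @ v" using True by simp
      moreover have "i = length u"
      proof -
        have "length (take i w) = i" using i by simp
        then show ?thesis using True by simp
      qed
      ultimately show ?thesis using True by (simp add: mon_apply)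
    next
      case False
      have "\<not> (i = length u \<and> w = u @ v)"
      proof
        assume "i = length u \<and> w = u @ v"
        then have "take i w = u \<and> drop i w = v" by simp
        with False show False by blast
      qed
      moreover have "mon u (take i w) * mon v (drop i w) = (0::'a)"
        using False by (simp add: mon_apply)
      ultimately show ?thesis by auto
    qed
  qed
  also have "\<dots> = (mon (u @ v) w :: 'a)" by (cases "w = u @ v") (simp_all add: mon_apply)
  finally show "(pmul (mon u) (mon v) w :: 'a) = mon (u @ v) w" .
qed

lemma pmul_psub_left: "pmul (psub a b) c = psub (pmul a c) (pmul b c)"
  by (simp add: fun_eq_iff pmul_def psub_def left_diff_distrib sum_subtractf)

lemma pmul_psub_right: "pmul a (psub b c) = psub (pmul a b) (pmul a c)"
  by (simp add: fun_eq_iff pmul_def psub_def right_diff_distrib sum_subtractf)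

lemma pmul_psmult_left: "pmul (psmult e a) c = psmult e (pmul a c)"
  by (simp add: fun_eq_iff pmul_def psmult_def sum_distrib_left mult.assoc)

lemma pmul_psmult_right: "pmul a (psmult e c) = psmult e (pmul a c)"
  by (simp add: fun_eq_iff pmul_def psmult_def sum_distrib_left mult.left_commute)

lemma pmul_const: "pmul (psmult c (mon [])) a = psmult c a"
proof
  fix w :: "var list"
  have "pmul (psmult c (mon [])) a w = (\<Sum>i\<le>length w. if i = 0 then c * a w else 0)"
    unfolding pmul_def
  proof (rule sum.cong[OF refl])
    fix i assume i: "i \<in> {..length w}"
    show "psmult c (mon []) (take i w) * a (drop i w) = (if i = 0 then c * a w else 0)"
    proof (cases "i = 0")
      case False
      then have "take i w \<noteq> []" using i by auto
      then show ?thesis using False by (simp add: psmult_def mon_apply)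
    qed (simp add: psmult_def mon_apply)
  qed
  then show "pmul (psmult c (mon [])) a w = psmult c a w" by (simp add: psmult_def)
qed


lemma psmult_one: "psmult 1 (f::'a::monoid_mult ncpoly) = f" by (simp add: psmult_def fun_eq_iff)

context
  fixes J :: "'a::idom ncpoly set"
  assumes J: "is_ideal J"
begin

lemma J_zero: "(\<lambda>_. 0) \<in> J" using J by (simp add: is_ideal_def)
lemma J_add: "a \<in> J \<Longrightarrow> b \<in> J \<Longrightarrow> padd a b \<in> J" using J by (simp add: is_ideal_def)
lemma J_mulL: "a \<in> J \<Longrightarrow> p \<in> ncP \<Longrightarrow> pmul p a \<in> J" using J by (simp add: is_ideal_def)
lemma J_mulR: "a \<in> J \<Longrightarrow> p \<in> ncP \<Longrightarrow> pmul a p \<in> J" using J by (simp add: is_ideal_def)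
lemma J_ncP: "a \<in> J \<Longrightarrow> a \<in> ncP" using J by (auto simp: is_ideal_def)

lemma J_smult: "a \<in> J \<Longrightarrow> psmult c a \<in> J"
proof -
  assume a: "a \<in> J"
  have "pmul (psmult c (mon [])) a \<in> J" by (rule J_mulL[OF a psmult_ncP[OF mon_ncP]])
  then show ?thesis by (simp add: pmul_const)
qed

end

definition Erel :: "'a::idom ncpoly set \<Rightarrow> var list \<Rightarrow> var list \<Rightarrow> bool" where
  "Erel J u v \<longleftrightarrow> (\<exists>e. (e = 1 \<or> e = -1) \<and> psub (mon u) (psmult e (mon v)) \<in> J)"

context
  fixes J :: "'a::idom ncpoly set"
  assumes J: "is_ideal J"
begin

lemma Erel_refl: "Erel J u u"
proof -
  have "psub (mon u) (psmult 1 (mon u)) = (\<lambda>_. (0::'a))"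
    by (simp add: psub_def psmult_def fun_eq_iff)
  then have "psub (mon u) (psmult 1 (mon u)) \<in> J" using J_zero[OF J] by simp
  then show ?thesis unfolding Erel_def by (intro exI[of _ 1]) simp
qed

lemma Erel_trans: "Erel J u v \<Longrightarrow> Erel J v w \<Longrightarrow> Erel J u w"
proof -
  assume "Erel J u v" "Erel J v w"
  then obtain e1 e2 :: 'a where e1: "e1 = 1 \<or> e1 = -1" and h1: "psub (mon u) (psmult e1 (mon v)) \<in> J"
    and e2: "e2 = 1 \<or> e2 = -1" and h2: "psub (mon v) (psmult e2 (mon w)) \<in> J"
    unfolding Erel_def by blast
  have eq: "psub (mon u) (psmult (e1 * e2) (mon w)) =
     padd (psub (mon u) (psmult e1 (mon v))) (psmult e1 (psub (mon v) (psmult e2 (mon w))))"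
    by (simp add: fun_eq_iff padd_def psub_def psmult_def algebra_simps)
  have "psub (mon u) (psmult (e1 * e2) (mon w)) \<in> J"
    unfolding eq by (rule J_add[OF J h1 J_smult[OF J h2]])
  moreover have "e1 * e2 = 1 \<or> e1 * e2 = -1" using e1 e2 by auto
  ultimately show ?thesis unfolding Erel_def by blast
qed

lemma Erel_ctx: "Erel J u v \<Longrightarrow> Erel J (p @ u @ q) (p @ v @ q)"
proof -
  assume "Erel J u v"
  then obtain e :: 'a where e: "e = 1 \<or> e = -1" and h: "psub (mon u) (psmult e (mon v)) \<in> J"
    unfolding Erel_def by blast
  have eq: "psub (mon (p @ u @ q)) (psmult e (mon (p @ v @ q))) =
      pmul (mon p) (pmul (psub (mon u) (psmult e (mon v))) (mon q))"
    by (simp add: pmul_psub_left pmul_psub_right pmul_psmult_left pmul_psmult_right pmul_mon_mon)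
  have "psub (mon (p @ u @ q)) (psmult e (mon (p @ v @ q))) \<in> J"
    unfolding eq by (rule J_mulL[OF J J_mulR[OF J h mon_ncP] mon_ncP])
  then show ?thesis using e unfolding Erel_def by blast
qed

lemma Erel_ctx': "Erel J u v \<Longrightarrow> Erel J (p @ u) (p @ v)"
  using Erel_ctx[of u v p "[]"] by simp

lemma Erel_ctx'': "Erel J u v \<Longrightarrow> Erel J (u @ q) (v @ q)"
  using Erel_ctx[of u v "[]" q] by simp

end


lemma eval_word_mon: "eval_word (\<lambda>x. mon [\<sigma> x]) u = (mon (map \<sigma> u) :: 'a::comm_ring_1 ncpoly)"
proof (induction u)
  case Nil then show ?case by (simp add: eval_word_def)
next
  case (Cons x u)
  have "eval_word (\<lambda>x. mon [\<sigma> x]) (x # u) = pmul (mon [\<sigma> x]) (eval_word (\<lambda>x. mon [\<sigma> x]) u)"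
    by (simp add: eval_word_def)
  also have "\<dots> = (mon (map \<sigma> (x # u)) :: 'a ncpoly)" using Cons by (simp add: pmul_mon_mon)
  finally show ?case .
qed

lemma subst_psub:
  assumes "u \<noteq> v"
  shows "subst (\<lambda>x. mon [\<sigma> x]) (psub (mon u) (mon v)) = (psub (mon (map \<sigma> u)) (mon (map \<sigma> v)) :: 'a::comm_ring_1 ncpoly)"
proof -
  have supp: "{w. psub (mon u) (mon v) w \<noteq> (0::'a)} = {u, v}" using assms by (auto simp: psub_def mon_apply)
  show ?thesis using assms
    by (simp add: subst_def supp eval_word_mon fun_eq_iff) (simp add: psub_def mon_apply)
qed

lemma subst_padd:
  assumes "u \<noteq> v"
  shows "subst (\<lambda>x. mon [\<sigma> x]) (padd (mon u) (mon v)) = (padd (mon (map \<sigma> u)) (mon (map \<sigma> v)) :: 'a::idom ncpoly)"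
proof -
  have supp: "{w. padd (mon u) (mon v) w \<noteq> (0::'a)} = {u, v}" using assms by (auto simp: padd_def mon_apply)
  show ?thesis using assms
    by (simp add: subst_def supp eval_word_mon fun_eq_iff) (simp add: padd_def mon_apply)
qed

lemma zdeg_single: "zdeg [x] = (if is_Z x then 1 else 0)" by (simp add: zdeg_def)

lemma weak_subst_ren:
  assumes "\<And>x. is_Z (\<sigma> x) = is_Z x"
  shows "weak_subst (\<lambda>x. mon [\<sigma> x] :: 'a::comm_ring_1 ncpoly)"
  unfolding weak_subst_def L0_def L1_def
proof (intro conjI allI CollectI)
  fix i
  have "\<not> is_Z (\<sigma> (Y i))" using assms[of "Y i"] by (simp add: is_Z_def)
  then show "homog False (mon [\<sigma> (Y i)] :: 'a ncpoly)"
    by (simp add: homog_def mon_apply zdeg_single)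
  have "is_Z (\<sigma> (Z i))" using assms[of "Z i"] by (simp add: is_Z_def)
  then show "homog True (mon [\<sigma> (Z i)] :: 'a ncpoly)"
    by (simp add: homog_def mon_apply zdeg_single)
qed (auto intro: LieX.gen)

context
  fixes J :: "'a::idom ncpoly set"
  assumes W: "weak_ideal J" and G: "gens \<subseteq> J"
begin

lemma WJ: "is_ideal J" using W by (simp add: weak_ideal_def)

lemma W_subst: "weak_subst s \<Longrightarrow> f \<in> J \<Longrightarrow> subst s f \<in> J" using W by (simp add: weak_ideal_def)

lemma Erel_YY: "Erel J [Y i, Y j] [Y j, Y i]"
proof -
  let ?\<sigma> = "\<lambda>x. case x of Y k \<Rightarrow> Y (if k = 1 then i else j) | Z k \<Rightarrow> Z k"
  have g: "psub (mon [Y 1, Y 2]) (mon [Y 2, Y 1]) \<in> J" using G by (simp add: gens_def)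
  have ws: "weak_subst (\<lambda>x. mon [?\<sigma> x] :: 'a ncpoly)"
    by (rule weak_subst_ren) (simp add: is_Z_def split: var.split)
  have "subst (\<lambda>x. mon [?\<sigma> x]) (psub (mon [Y 1, Y 2]) (mon [Y 2, Y 1])) \<in> J"
    by (rule W_subst[OF ws g])
  then have "psub (mon [Y i, Y j]) (mon [Y j, Y i]) \<in> J" by (simp add: subst_psub)
  then show ?thesis unfolding Erel_def by (intro exI[of _ 1]) (simp add: psmult_one)
qed

lemma Erel_ZZZ: "Erel J [Z a, Z b, Z c] [Z c, Z b, Z a]"
proof -
  let ?\<sigma> = "\<lambda>x. case x of Y k \<Rightarrow> Y k | Z k \<Rightarrow> Z (if k = 1 then a else if k = 2 then b else c)"
  have g: "psub (mon [Z 1, Z 2, Z 3]) (mon [Z 3, Z 2, Z 1]) \<in> J" using G by (simp add: gens_def)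
  have ws: "weak_subst (\<lambda>x. mon [?\<sigma> x] :: 'a ncpoly)"
    by (rule weak_subst_ren) (simp add: is_Z_def split: var.split)
  have "subst (\<lambda>x. mon [?\<sigma> x]) (psub (mon [Z 1, Z 2, Z 3]) (mon [Z 3, Z 2, Z 1])) \<in> J"
    by (rule W_subst[OF ws g])
  then have "psub (mon [Z a, Z b, Z c]) (mon [Z c, Z b, Z a]) \<in> J" by (simp add: subst_psub)
  then show ?thesis unfolding Erel_def by (intro exI[of _ 1]) (simp add: psmult_one)
qed

lemma Erel_ZY: "Erel J [Z j, Y i] [Y i, Z j]"
proof -
  let ?\<sigma> = "\<lambda>x. case x of Y k \<Rightarrow> Y i | Z k \<Rightarrow> Z j"
  have g: "padd (mon [Y 1, Z 1]) (mon [Z 1, Y 1]) \<in> J" using G by (simp add: gens_def)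
  have ws: "weak_subst (\<lambda>x. mon [?\<sigma> x] :: 'a ncpoly)"
    by (rule weak_subst_ren) (simp add: is_Z_def split: var.split)
  have "subst (\<lambda>x. mon [?\<sigma> x]) (padd (mon [Y 1, Z 1]) (mon [Z 1, Y 1])) \<in> J"
    by (rule W_subst[OF ws g])
  then have h: "padd (mon [Y i, Z j]) (mon [Z j, Y i]) \<in> J" by (simp add: subst_padd)
  have "psub (mon [Z j, Y i]) (psmult (-1) (mon [Y i, Z j])) = (padd (mon [Y i, Z j]) (mon [Z j, Y i]) :: 'a ncpoly)"
    by (simp add: fun_eq_iff psub_def psmult_def padd_def algebra_simps)
  then show ?thesis unfolding Erel_def using h by (intro exI[of _ "-1"]) simp
qed

end


fun ins2 :: "nat \<Rightarrow> nat list \<Rightarrow> nat list" where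
  "ins2 x (y # z # r) = (if x \<le> z then x # y # z # r else z # y # ins2 x r)"
| "ins2 x r = x # r"

fun zs :: "nat list \<Rightarrow> nat list" where
  "zs [] = []"
| "zs (x # c) = ins2 x (zs c)"

fun loc :: "nat list \<Rightarrow> bool" where
  "loc (x # y # z # r) = (x \<le> z \<and> loc (y # z # r))"
| "loc _ = True"

lemma ins2_length: "length (ins2 x r) = Suc (length r)"
  by (induction x r rule: ins2.induct) auto

lemma ins2_hd: "ins2 x r ! 0 = x \<or> (length r \<ge> 2 \<and> ins2 x r ! 0 = r ! 1)"
  by (induction x r rule: ins2.induct) auto

lemma ins2_snd: "r \<noteq> [] \<Longrightarrow> ins2 x r ! 1 = r ! 0"
  by (induction x r rule: ins2.induct) auto

lemma loc_tail: "loc (y # r) \<Longrightarrow> loc r"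
  by (cases r rule: loc.cases) auto

lemma loc_Cons2: "loc (y # z # t) \<longleftrightarrow> ((t \<noteq> [] \<longrightarrow> y \<le> t ! 0) \<and> loc (z # t))"
  by (cases t) auto

lemma loc_ins2: "loc r \<Longrightarrow> loc (ins2 x r)"
proof (induction x r rule: ins2.induct)
  case (1 x y z r)
  show ?case
  proof (cases "x \<le> z")
    case True then show ?thesis using 1 by simp
  next
    case False
    have lr: "loc r" using "1.prems" by (auto intro: loc_tail)
    have IH: "loc (ins2 x r)" using "1.IH"[OF False lr] .
    obtain t where t: "ins2 x r = t" by blast
    have tne: "t \<noteq> []" using ins2_length[of x r] t by auto
    have h0: "z \<le> t ! 0"
    proof (cases "t ! 0 = x")
      case True then show ?thesis using False by simp
    next
      case False
      then have r2: "length r \<ge> 2" and tr: "t ! 0 = r ! 1" using ins2_hd[of x r] t by auto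
      obtain r0 r1 r' where r: "r = r0 # r1 # r'" using r2
        by (metis One_nat_def Suc_1 Suc_le_length_iff)
      show ?thesis using "1.prems" r tr by simp
    qed
    have h1: "length t \<ge> 2 \<Longrightarrow> y \<le> t ! 1"
    proof -
      assume "length t \<ge> 2"
      then have "r \<noteq> []" using ins2_length[of x r] t by auto
      then have "t ! 1 = r ! 0" using ins2_snd t by blast
      then show ?thesis using "1.prems" \<open>r \<noteq> []\<close> by (cases r) auto
    qed
    have "loc (y # t)"
    proof (cases t)
      case Nil then show ?thesis using tne by simp
    next
      case (Cons t0 t')
      then show ?thesis using IH t h1 by (cases t') auto
    qed
    then have "loc (z # y # t)" using h0 tne by (cases t) auto
    then show ?thesis using False t by simp
  qed
qed auto

lemma loc_zs: "loc (zs c)"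
  by (induction c) (auto intro: loc_ins2)

lemma loc_step: "loc c \<Longrightarrow> i + 2 < length c \<Longrightarrow> c ! i \<le> c ! (i + 2)"
proof (induction c arbitrary: i rule: loc.induct)
  case (1 x y z r)
  show ?case
  proof (cases i)
    case 0 then show ?thesis using 1 by simp
  next
    case (Suc k)
    have l: "loc (y # z # r)" using "1.prems"(1) by simp
    have "k + 2 < length (y # z # r)" using "1.prems"(2) Suc by simp
    then have "(y # z # r) ! k \<le> (y # z # r) ! (k + 2)" using "1.IH"[OF l] by blast
    then show ?thesis using Suc by simp
  qed
qed simp_all

lemma loc_Bmon: "loc c \<Longrightarrow> i < j \<Longrightarrow> j < length c \<Longrightarrow> even i = even j \<Longrightarrow> c ! i \<le> c ! j"
proof -
  assume l: "loc c" and ij: "i < j" "j < length c" "even i = even j"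
  have "even (j - i)" using ij by simp
  then obtain k where "j - i = 2 * k" by (rule evenE)
  then have k: "j = i + 2 * k" using ij by simp
  have "\<forall>j. j = i + 2 * k \<longrightarrow> j < length c \<longrightarrow> c ! i \<le> c ! j"
  proof (induction k)
    case 0 then show ?case by simp
  next
    case (Suc k)
    show ?case
    proof (intro allI impI)
      fix j assume j: "j = i + 2 * Suc k" "j < length c"
      have "c ! i \<le> c ! (i + 2 * k)" using Suc j by auto
      also have "\<dots> \<le> c ! (i + 2 * k + 2)" using loc_step[OF l, of "i + 2 * k"] j by simp
      finally show "c ! i \<le> c ! j" using j by simp
    qed
  qed
  then show ?thesis using k ij by blast
qed

context
  fixes J :: "'a::idom ncpoly set"
  assumes W: "weak_ideal J" and G: "gens \<subseteq> J"
begin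

lemma Erel_Z_past_Y: "Erel J (Z j # map Y a @ r) (map Y a @ Z j # r)"
proof (induction a)
  case Nil then show ?case using Erel_refl[OF WJ[OF W G]] by simp
next
  case (Cons i a)
  have "Erel J ([] @ [Z j, Y i] @ (map Y a @ r)) ([] @ [Y i, Z j] @ (map Y a @ r))"
    by (rule Erel_ctx[OF WJ[OF W G] Erel_ZY[OF W G]])
  moreover have "Erel J ([Y i] @ (Z j # map Y a @ r)) ([Y i] @ (map Y a @ Z j # r))"
    by (rule Erel_ctx'[OF WJ[OF W G] Cons])
  ultimately show ?case using Erel_trans[OF WJ[OF W G]] by fastforce
qed

lemma Erel_split: "\<exists>a c. Erel J w (map Y a @ map Z c)"
proof (induction w)
  case Nil then show ?case using Erel_refl[OF WJ[OF W G], of "[]"] by (intro exI[of _ "[]"]) simp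
next
  case (Cons x w)
  then obtain a c where h: "Erel J w (map Y a @ map Z c)" by blast
  have h1: "Erel J ([x] @ w) ([x] @ (map Y a @ map Z c))" by (rule Erel_ctx'[OF WJ[OF W G] h])
  show ?case
  proof (cases x)
    case (Y i)
    then show ?thesis using h1 by (intro exI[of _ "i # a"] exI[of _ c]) simp
  next
    case (Z j)
    have "Erel J (Z j # map Y a @ map Z c) (map Y a @ Z j # map Z c)" by (rule Erel_Z_past_Y)
    then have "Erel J (x # w) (map Y a @ map Z (j # c))"
      using h1 Z Erel_trans[OF WJ[OF W G]] by fastforce
    then show ?thesis by blast
  qed
qed

lemma Erel_insort: "Erel J (Y i # map Y b @ r) (map Y (insort i b) @ r)"
proof (induction b)
  case Nil then show ?case using Erel_refl[OF WJ[OF W G]] by simp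
next
  case (Cons x b)
  show ?case
  proof (cases "i \<le> x")
    case True then show ?thesis using Erel_refl[OF WJ[OF W G]] by simp
  next
    case False
    have "Erel J ([] @ [Y i, Y x] @ (map Y b @ r)) ([] @ [Y x, Y i] @ (map Y b @ r))"
      by (rule Erel_ctx[OF WJ[OF W G] Erel_YY[OF W G]])
    moreover have "Erel J ([Y x] @ (Y i # map Y b @ r)) ([Y x] @ (map Y (insort i b) @ r))"
      by (rule Erel_ctx'[OF WJ[OF W G] Cons])
    ultimately show ?thesis using False Erel_trans[OF WJ[OF W G]] by fastforce
  qed
qed

lemma Erel_sortY: "Erel J (map Y a @ r) (map Y (sort a) @ r)"
proof (induction a)
  case Nil then show ?case using Erel_refl[OF WJ[OF W G]] by simp
next
  case (Cons i a)
  have "Erel J ([Y i] @ (map Y a @ r)) ([Y i] @ (map Y (sort a) @ r))"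
    by (rule Erel_ctx'[OF WJ[OF W G] Cons])
  moreover have "Erel J (Y i # map Y (sort a) @ r) (map Y (insort i (sort a)) @ r)"
    by (rule Erel_insort)
  ultimately show ?case using Erel_trans[OF WJ[OF W G]] by fastforce
qed

lemma Erel_ins2: "Erel J (Z x # map Z c) (map Z (ins2 x c))"
proof (induction x c rule: ins2.induct)
  case (1 x y z r)
  show ?case
  proof (cases "x \<le> z")
    case True then show ?thesis using Erel_refl[OF WJ[OF W G]] by simp
  next
    case False
    have "Erel J ([] @ [Z x, Z y, Z z] @ map Z r) ([] @ [Z z, Z y, Z x] @ map Z r)"
      by (rule Erel_ctx[OF WJ[OF W G] Erel_ZZZ[OF W G]])
    moreover have "Erel J ([Z z, Z y] @ (Z x # map Z r)) ([Z z, Z y] @ map Z (ins2 x r))"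
      by (rule Erel_ctx'[OF WJ[OF W G] "1.IH"[OF False]])
    ultimately show ?thesis using False Erel_trans[OF WJ[OF W G]] by fastforce
  qed
qed (auto intro: Erel_refl[OF WJ[OF W G]])

lemma Erel_zs: "Erel J (map Z c) (map Z (zs c))"
proof (induction c)
  case Nil then show ?case using Erel_refl[OF WJ[OF W G]] by simp
next
  case (Cons x c)
  have "Erel J ([Z x] @ map Z c) ([Z x] @ map Z (zs c))"
    by (rule Erel_ctx'[OF WJ[OF W G] Cons])
  moreover have "Erel J (Z x # map Z (zs c)) (map Z (ins2 x (zs c)))" by (rule Erel_ins2)
  ultimately show ?case using Erel_trans[OF WJ[OF W G]] by fastforce
qed

lemma Erel_Bmon: "\<exists>v \<in> Bmon. Erel J w v"
proof -
  obtain a c where h: "Erel J w (map Y a @ map Z c)" using Erel_split by blast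
  have "Erel J (map Y a @ map Z c) (map Y (sort a) @ map Z c)" by (rule Erel_sortY)
  moreover have "Erel J (map Y (sort a) @ map Z c) (map Y (sort a) @ map Z (zs c))"
    by (rule Erel_ctx'[OF WJ[OF W G] Erel_zs])
  ultimately have "Erel J w (map Y (sort a) @ map Z (zs c))"
    using h Erel_trans[OF WJ[OF W G]] by blast
  moreover have "map Y (sort a) @ map Z (zs c) \<in> Bmon"
    unfolding Bmon_def using loc_Bmon[OF loc_zs]
    by (intro CollectI exI[of _ "sort a"] exI[of _ "zs c"]) auto
  ultimately show ?thesis by blast
qed

end


definition good :: "'a::idom ncpoly set \<Rightarrow> 'a ncpoly \<Rightarrow> bool" where
  "good J f \<longleftrightarrow> (\<exists>g. g \<in> ncP \<and> (\<forall>w. g w \<noteq> 0 \<longrightarrow> w \<in> Bmon) \<and> psub f g \<in> J)"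

context
  fixes J :: "'a::idom ncpoly set"
  assumes W: "weak_ideal J" and G: "gens \<subseteq> J"
begin

lemma good_mon: "good J (mon w)"
proof -
  obtain v where v: "v \<in> Bmon" and E: "Erel J w v" using Erel_Bmon[OF W G] by blast
  then obtain e :: 'a where "psub (mon w) (psmult e (mon v)) \<in> J" unfolding Erel_def by blast
  moreover have "psmult e (mon v) \<in> ncP" by (rule psmult_ncP[OF mon_ncP])
  moreover have "\<forall>u. psmult e (mon v) u \<noteq> 0 \<longrightarrow> u \<in> Bmon" using v by (simp add: psmult_def mon_apply)
  ultimately show ?thesis unfolding good_def by blast
qed

lemma good_add: "good J f \<Longrightarrow> good J h \<Longrightarrow> good J (padd f h)"
proof -
  assume "good J f" "good J h"
  then obtain g1 g2 where g1: "g1 \<in> ncP" "\<forall>w. g1 w \<noteq> 0 \<longrightarrow> w \<in> Bmon" "psub f g1 \<in> J"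
    and g2: "g2 \<in> ncP" "\<forall>w. g2 w \<noteq> 0 \<longrightarrow> w \<in> Bmon" "psub h g2 \<in> J"
    unfolding good_def by blast
  have eq: "psub (padd f h) (padd g1 g2) = padd (psub f g1) (psub h g2)"
    by (simp add: fun_eq_iff psub_def padd_def)
  have "psub (padd f h) (padd g1 g2) \<in> J" unfolding eq by (rule J_add[OF WJ[OF W G] g1(3) g2(3)])
  moreover have "padd g1 g2 \<in> ncP" by (rule padd_ncP[OF g1(1) g2(1)])
  moreover have "\<forall>w. padd g1 g2 w \<noteq> 0 \<longrightarrow> w \<in> Bmon" using g1(2) g2(2) unfolding padd_def by (metis add_0)
  ultimately show ?thesis unfolding good_def by blast
qed

lemma good_smult: "good J f \<Longrightarrow> good J (psmult c f)"
proof -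
  assume "good J f"
  then obtain g where g: "g \<in> ncP" "\<forall>w. g w \<noteq> 0 \<longrightarrow> w \<in> Bmon" "psub f g \<in> J"
    unfolding good_def by blast
  have eq: "psub (psmult c f) (psmult c g) = psmult c (psub f g)"
    by (simp add: fun_eq_iff psub_def psmult_def algebra_simps)
  have "psub (psmult c f) (psmult c g) \<in> J" unfolding eq by (rule J_smult[OF WJ[OF W G] g(3)])
  moreover have "psmult c g \<in> ncP" by (rule psmult_ncP[OF g(1)])
  moreover have "\<forall>w. psmult c g w \<noteq> 0 \<longrightarrow> w \<in> Bmon" using g(2) by (auto simp: psmult_def)
  ultimately show ?thesis unfolding good_def by blast
qed

lemma good_zero: "good J (\<lambda>_. 0)"
proof -
  have "psub (\<lambda>_. 0) (\<lambda>_. 0) = (\<lambda>_. (0::'a))" by (simp add: psub_def)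
  moreover have "(\<lambda>_. (0::'a)) \<in> ncP" by (simp add: ncP_def)
  ultimately show ?thesis unfolding good_def using J_zero[OF WJ[OF W G]] by (intro exI[of _ "\<lambda>_. 0"]) auto
qed

lemma good_fin: "finite A \<Longrightarrow> \<forall>f. {w. f w \<noteq> 0} \<subseteq> A \<longrightarrow> good J f"
proof (induction A rule: finite_induct)
  case empty
  show ?case
  proof (intro allI impI)
    fix f :: "'a ncpoly" assume "{w. f w \<noteq> 0} \<subseteq> {}"
    then have "f = (\<lambda>_. 0)" by auto
    then show "good J f" using good_zero by simp
  qed
next
  case (insert a A)
  show ?case
  proof (intro allI impI)
    fix f :: "'a ncpoly" assume f: "{w. f w \<noteq> 0} \<subseteq> insert a A"
    have "{w. (f(a := 0)) w \<noteq> 0} \<subseteq> A" using f by auto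
    then have g1: "good J (f(a := 0))" using insert.IH by blast
    have eq: "f = padd (psmult (f a) (mon a)) (f(a := 0))"
      by (simp add: fun_eq_iff padd_def psmult_def mon_apply)
    show "good J f" by (subst eq) (rule good_add[OF good_smult[OF good_mon] g1])
  qed
qed

lemma good_all: "f \<in> ncP \<Longrightarrow> good J f"
  using good_fin[of "{w. f w \<noteq> 0}"] by (simp add: ncP_def)

end

lemma sum_mon_eq: assumes fin: "finite {w. g w \<noteq> 0}" shows "
  (\<lambda>v. \<Sum>w\<in>{w. g w \<noteq> 0}. g w * mon w v) = (g :: 'a::comm_ring_1 ncpoly)"
proof
  fix v
  have "(\<Sum>w\<in>{w. g w \<noteq> 0}. g w * mon w v) = (\<Sum>w\<in>{w. g w \<noteq> 0}. if v = w then g w else 0)"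
    by (rule sum.cong) (auto simp: mon_apply)
  also have "\<dots> = g v" by (simp add: sum.delta'[OF fin])
  finally show "(\<Sum>w\<in>{w. g w \<noteq> 0}. g w * mon w v) = g v" .
qed

theorem mainTheorem3:
  fixes f :: "'a::idom ncpoly"
  assumes "infinite (UNIV :: 'a set)"
    and "f \<in> ncP"
  shows "\<exists>S c. finite S \<and> S \<subseteq> Bmon \<and>
           psub f (\<lambda>v. \<Sum>w\<in>S. c w * mon w v) \<in> (Iw :: 'a ncpoly set)"
proof -
  let ?F = "{J :: 'a ncpoly set. weak_ideal J \<and> gens \<subseteq> J}"
  have Iw: "(Iw :: 'a ncpoly set) = \<Inter> ?F" by (simp add: Iw_def weak_ideal_gen_def)
  show ?thesis
  proof (cases "?F = {}")
    case True
    then have "(Iw :: 'a ncpoly set) = UNIV" unfolding Iw by (simp only: Inter_empty)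
    then show ?thesis by (intro exI[of _ "{}"] exI[of _ "\<lambda>_. 0"]) simp
  next
    case False
    then obtain J0 where J0: "J0 \<in> ?F" by blast
    have c1: "\<Inter> ?F \<subseteq> ncP" using J0 by (auto simp: weak_ideal_def is_ideal_def)
    have c2: "(\<lambda>_. 0) \<in> \<Inter> ?F" by (auto simp: weak_ideal_def is_ideal_def)
    have c3: "\<forall>a\<in>\<Inter> ?F. \<forall>b\<in>\<Inter> ?F. padd a b \<in> \<Inter> ?F" by (auto simp: weak_ideal_def is_ideal_def)
    have c4: "\<forall>a\<in>\<Inter> ?F. \<forall>p\<in>ncP. pmul p a \<in> \<Inter> ?F \<and> pmul a p \<in> \<Inter> ?F"
      by (auto simp: weak_ideal_def is_ideal_def)
    have c5: "\<forall>s. weak_subst s \<longrightarrow> (\<forall>fa\<in>\<Inter> ?F. subst s fa \<in> \<Inter> ?F)"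
    proof (intro allI impI ballI InterI)
      fix s :: "var \<Rightarrow> 'a ncpoly" and fa J assume ws: "weak_subst s" and fa: "fa \<in> \<Inter> ?F" and JF: "J \<in> ?F"
      then have "fa \<in> J" by blast
      moreover have "weak_ideal J" using JF by simp
      ultimately show "subst s fa \<in> J" using ws unfolding weak_ideal_def by blast
    qed
    have wi: "weak_ideal (\<Inter> ?F)"
      unfolding weak_ideal_def[of "\<Inter> ?F"] is_ideal_def[of "\<Inter> ?F"] by (intro conjI c1 c2 c3 c4 c5)
    have gi: "gens \<subseteq> \<Inter> ?F" by auto
    obtain g where g: "g \<in> ncP" "\<forall>w. g w \<noteq> 0 \<longrightarrow> w \<in> Bmon" "psub f g \<in> \<Inter> ?F"
      using good_all[OF wi gi assms(2)] unfolding good_def by blast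
    have fin: "finite {w. g w \<noteq> 0}" using g(1) by (simp add: ncP_def)
    show ?thesis
      using g fin sum_mon_eq[OF fin] Iw
      by (intro exI[of _ "{w. g w \<noteq> 0}"] exI[of _ g]) auto
  qed
qed

end
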